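(* In System $\mathsf{F_{<:}^{K\top}}$, for every term-in-context $\Theta\vdash t$ and type $\Theta\vdash T$: $\Theta\vdash t:T$ if and only if there is a type $S$ with $\Theta\vdash_M t:S$ and $\Theta\vdash S<:T$.
   Context: System $\mathsf{F_{<:}^{K\top}}$: raw types $T ::= \top \mid X \mid T\to T \mid \forall^{\mathsf K}(X<:T).T \mid \forall^\top(X<:T).T$, up to $\alpha$-conversion. Contexts $\Theta$: finite sequences of $X<:T$ or $x:T$ with distinct variables, each type well-formed over the preceding part. Subtyping $\Theta\vdash S<:T$: (Var) $\Theta,X<:T,\Theta'\vdash X<:T$; (Top) $T<:\top$; (Refl); (Trans); ($\to$) from $S'<:S$, $T<:T'$ infer $S\to T<:S'\to T'$; ($\forall$-Fun) from $\Theta,X<:S\vdash T<:T'$ infer $\Theta\vdash\forall^{\mathsf K}(X<:S).T<:\forall^{\mathsf K}(X<:S).T'$; ($\forall$-Loc) from $\Theta\vdash T_0<:S_0$, $\Theta,X<:S_0\vdash S_1<:T_1$ infer $\Theta\vdash\forall^{\mathsf K}(X<:S_0).S_1<:\forall^\top(X<:T_0).T_1$; ($\forall$-Top) from $\Theta\vdash T_0<:S_0$, $\Theta,X<:\top\vdash S_1<:T_1$ infer $\Theta\vdash\forall^\top(X<:S_0).S_1<:\forall^\top(X<:T_0).T_1$. Raw terms $t ::= \mathsf{top}\mid x\mid\lambda(x:T).t\mid\Lambda(X<:T).t\mid t\,t\mid t\{T\}$. Typing $\Theta\vdash t:T$: $\Theta\vdash\mathsf{top}:\top$; $\Theta,x:T,\Theta'\vdash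 x:T$; (sub) from $t:T$, $T<:T'$ infer $t:T'$; from $\Theta,x:S\vdash t:T$ infer $\Theta\vdash\lambda(x:S).t:S\to T$; from $t:S\to T$, $s:S$ infer $t\,s:T$; from $\Theta,X<:S\vdash t:T$ infer $\Theta\vdash\Lambda(X<:S).t:\forall^{\mathsf K}(X<:S).T$; from $\Theta\vdash t:\forall^\top(X<:S).T$ and $\Theta\vdash S'<:S$ infer $\Theta\vdash t\{S'\}:T[S'/X]$. $\Theta^*(T)=\Theta^*(S)$ if $T\equiv X$ and $X<:S$ occurs in $\Theta$; $\Theta^*(T)=T$ otherwise. Minimal typing $\Theta\vdash_M t:T$: $\Theta,x:T,\Theta'\vdash_M x:T$; $\Theta\vdash_M\mathsf{top}:\top$; from $\Theta,x:S\vdash_M t:T$ infer $\Theta\vdash_M\lambda(x:S).t:S\to T$; from $\Theta\vdash_M r:R$, $\Theta\vdash_M s:S$, $\Theta\vdash S<:S'$ with $\Theta^*(R)=S'\to T$ infer $\Theta\vdash_M r\,s:T$; from $\Theta,X<:S\vdash_M t:T$ infer $\Theta\vdash_M\Lambda(X<:S).t:\forall^{\mathsf K}(X<:S).T$; from $\Theta\vdash_M r:R$ and $\Theta\vdash S<:S'$ with $\Theta^*(R)=\forall^{\mathsf K}(X<:S').T$ or $\Theta^*(R)=\forall^\top(X<:S').T$ infer $\Theta\vdash_M r\{S\}:T[S/X]$. *)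

theory Defs
  imports Main
begin

text \<open>Types and terms are
represented with de Bruijn indices (this realises "up to alpha-conversion").
Type variables and term variables live in separate index spaces: TVar i refers
to the i-th type-variable binding of the context counted from the most recent
one, Var j to the j-th term-variable binding.  Contexts are lists whose head is
the most recently added binding.\<close>

datatype ty =
    Top
  | TVar nat
  | Arr ty ty
  | AllK ty ty   \<comment> \<open>AllK S T: kernel quantifier, binder X<:S, body T (X is index 0)\<close>
  | AllT ty ty

datatype trm =
    TopTm
  | Var nat
  | Abs ty trm
  | TAbs ty trm
  | App trm trm
  | TApp trm ty

datatype bind = TB ty | VB ty

type_synonym ctx = "bind list"

fun liftT :: "nat \<Rightarrow> nat \<Rightarrow> ty \<Rightarrow> ty" where
  "liftT n k Top = Top"
| "liftT n k (TVar i) = (if i < k then TVar i else TVar (i + n))"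
| "liftT n k (Arr S T) = Arr (liftT n k S) (liftT n k T)"
| "liftT n k (AllK S T) = AllK (liftT n k S) (liftT n (Suc k) T)"
| "liftT n k (AllT S T) = AllT (liftT n k S) (liftT n (Suc k) T)"

text \<open>substT T k U: substitute U for type variable k in T (and lower the indices above k).
  T[S/X] for the body T of a binder X is substT T 0 S.\<close>
fun substT :: "ty \<Rightarrow> nat \<Rightarrow> ty \<Rightarrow> ty" where
  "substT Top k U = Top"
| "substT (TVar i) k U =
     (if i < k then TVar i else if i = k then liftT k 0 U else TVar (i - 1))"
| "substT (Arr S T) k U = Arr (substT S k U) (substT T k U)"
| "substT (AllK S T) k U = AllK (substT S k U) (substT T (Suc k) U)"
| "substT (AllT S T) k U = AllT (substT S k U) (substT T (Suc k) U)"

fun ntv :: "ctx \<Rightarrow> nat" where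
  "ntv [] = 0"
| "ntv (TB S # \<Gamma>) = Suc (ntv \<Gamma>)"
| "ntv (VB T # \<Gamma>) = ntv \<Gamma>"

text \<open>bound of type variable i, expressed in the whole context\<close>
fun tvbound :: "ctx \<Rightarrow> nat \<Rightarrow> ty option" where
  "tvbound [] i = None"
| "tvbound (TB S # \<Gamma>) 0 = Some (liftT 1 0 S)"
| "tvbound (TB S # \<Gamma>) (Suc i) = map_option (liftT 1 0) (tvbound \<Gamma> i)"
| "tvbound (VB T # \<Gamma>) i = tvbound \<Gamma> i"

text \<open>type of term variable j, expressed in the whole context\<close>
fun vlookup :: "ctx \<Rightarrow> nat \<Rightarrow> ty option" where
  "vlookup [] j = None"
| "vlookup (VB T # \<Gamma>) 0 = Some T"
| "vlookup (VB T # \<Gamma>) (Suc j) = vlookup \<Gamma> j"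
| "vlookup (TB S # \<Gamma>) j = map_option (liftT 1 0) (vlookup \<Gamma> j)"

fun wfT :: "nat \<Rightarrow> ty \<Rightarrow> bool" where
  "wfT n Top = True"
| "wfT n (TVar i) = (i < n)"
| "wfT n (Arr S T) = (wfT n S \<and> wfT n T)"
| "wfT n (AllK S T) = (wfT n S \<and> wfT (Suc n) T)"
| "wfT n (AllT S T) = (wfT n S \<and> wfT (Suc n) T)"

fun wf_ctx :: "ctx \<Rightarrow> bool" where
  "wf_ctx [] = True"
| "wf_ctx (TB S # \<Gamma>) = (wf_ctx \<Gamma> \<and> wfT (ntv \<Gamma>) S)"
| "wf_ctx (VB T # \<Gamma>) = (wf_ctx \<Gamma> \<and> wfT (ntv \<Gamma>) T)"

fun wf_tm :: "ctx \<Rightarrow> trm \<Rightarrow> bool" where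
  "wf_tm \<Gamma> TopTm = True"
| "wf_tm \<Gamma> (Var j) = (vlookup \<Gamma> j \<noteq> None)"
| "wf_tm \<Gamma> (Abs T t) = (wfT (ntv \<Gamma>) T \<and> wf_tm (VB T # \<Gamma>) t)"
| "wf_tm \<Gamma> (TAbs T t) = (wfT (ntv \<Gamma>) T \<and> wf_tm (TB T # \<Gamma>) t)"
| "wf_tm \<Gamma> (App t s) = (wf_tm \<Gamma> t \<and> wf_tm \<Gamma> s)"
| "wf_tm \<Gamma> (TApp t T) = (wf_tm \<Gamma> t \<and> wfT (ntv \<Gamma>) T)"

fun promote :: "ctx \<Rightarrow> ty \<Rightarrow> ty" where
  "promote [] T = T"
| "promote (VB U # \<Gamma>) T = promote \<Gamma> T"
| "promote (TB S # \<Gamma>) (TVar 0) = liftT 1 0 (promote \<Gamma> S)"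
| "promote (TB S # \<Gamma>) (TVar (Suc i)) = liftT 1 0 (promote \<Gamma> (TVar i))"
| "promote (TB S # \<Gamma>) Top = Top"
| "promote (TB S # \<Gamma>) (Arr A B) = Arr A B"
| "promote (TB S # \<Gamma>) (AllK A B) = AllK A B"
| "promote (TB S # \<Gamma>) (AllT A B) = AllT A B"

inductive sub :: "ctx \<Rightarrow> ty \<Rightarrow> ty \<Rightarrow> bool" where
  SVar: "tvbound \<Gamma> i = Some T \<Longrightarrow> sub \<Gamma> (TVar i) T"
| STop: "sub \<Gamma> T Top"
| SRefl: "sub \<Gamma> T T"
| STrans: "sub \<Gamma> S U \<Longrightarrow> sub \<Gamma> U T \<Longrightarrow> sub \<Gamma> S T"
| SArr: "sub \<Gamma> S' S \<Longrightarrow> sub \<Gamma> T T' \<Longrightarrow> sub \<Gamma> (Arr S T) (Arr S' T')"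
| SAllFun: "sub (TB S # \<Gamma>) T T' \<Longrightarrow> sub \<Gamma> (AllK S T) (AllK S T')"
| SAllLoc: "sub \<Gamma> T0 S0 \<Longrightarrow> sub (TB S0 # \<Gamma>) S1 T1 \<Longrightarrow> sub \<Gamma> (AllK S0 S1) (AllT T0 T1)"
| SAllTop: "sub \<Gamma> T0 S0 \<Longrightarrow> sub (TB Top # \<Gamma>) S1 T1 \<Longrightarrow> sub \<Gamma> (AllT S0 S1) (AllT T0 T1)"

inductive typing :: "ctx \<Rightarrow> trm \<Rightarrow> ty \<Rightarrow> bool" where
  TyTop: "typing \<Gamma> TopTm Top"
| TyVar: "vlookup \<Gamma> j = Some T \<Longrightarrow> typing \<Gamma> (Var j) T"
| TySub: "typing \<Gamma> t T \<Longrightarrow> sub \<Gamma> T T' \<Longrightarrow> typing \<Gamma> t T'"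
| TyAbs: "typing (VB S # \<Gamma>) t T \<Longrightarrow> typing \<Gamma> (Abs S t) (Arr S T)"
| TyApp: "typing \<Gamma> t (Arr S T) \<Longrightarrow> typing \<Gamma> s S \<Longrightarrow> typing \<Gamma> (App t s) T"
| TyTAbs: "typing (TB S # \<Gamma>) t T \<Longrightarrow> typing \<Gamma> (TAbs S t) (AllK S T)"
| TyTApp: "typing \<Gamma> t (AllT S T) \<Longrightarrow> sub \<Gamma> S' S \<Longrightarrow> typing \<Gamma> (TApp t S') (substT T 0 S')"

inductive mtyp :: "ctx \<Rightarrow> trm \<Rightarrow> ty \<Rightarrow> bool" where
  MVar: "vlookup \<Gamma> j = Some T \<Longrightarrow> mtyp \<Gamma> (Var j) T"
| MTop: "mtyp \<Gamma> TopTm Top"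
| MAbs: "mtyp (VB S # \<Gamma>) t T \<Longrightarrow> mtyp \<Gamma> (Abs S t) (Arr S T)"
| MApp: "mtyp \<Gamma> r R \<Longrightarrow> mtyp \<Gamma> s S \<Longrightarrow> sub \<Gamma> S S' \<Longrightarrow> promote \<Gamma> R = Arr S' T
         \<Longrightarrow> mtyp \<Gamma> (App r s) T"
| MTAbs: "mtyp (TB S # \<Gamma>) t T \<Longrightarrow> mtyp \<Gamma> (TAbs S t) (AllK S T)"
| MTApp: "mtyp \<Gamma> r R \<Longrightarrow> sub \<Gamma> S S'
          \<Longrightarrow> (promote \<Gamma> R = AllK S' T \<or> promote \<Gamma> R = AllT S' T)
          \<Longrightarrow> mtyp \<Gamma> (TApp r S) (substT T 0 S)"

end

theory Submission
  imports Defs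
begin

lemma liftT_0[simp]: "liftT 0 k T = T"
  by (induct T arbitrary: k) auto

lemma subst_lift[simp]: "substT (liftT (Suc 0) k T) k U = T"
  by (induct T arbitrary: k) auto

lemma lift_lift: "j \<le> k \<Longrightarrow> liftT (Suc 0) j (liftT (Suc 0) k S) = liftT (Suc 0) (Suc k) (liftT (Suc 0) j S)"
  by (induct S arbitrary: j k) auto

lemma lift_lift2: "i \<le> j \<Longrightarrow> j \<le> i + m \<Longrightarrow> liftT n j (liftT m i U) = liftT (n+m) i U"
  by (induct U arbitrary: i j) auto

lemma subst_lift_comm: "j \<le> k \<Longrightarrow> substT (liftT (Suc 0) j S) (Suc k) U = liftT (Suc 0) j (substT S k U)"
  by (induct S arbitrary: j k) (auto simp: lift_lift2)

lemma weak_ext: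
  assumes "\<forall>i T. tvbound \<Gamma> i = Some T \<longrightarrow> tvbound \<Gamma>' (if i<k then i else Suc i) = Some (liftT 1 k T)"
  shows "\<forall>i T. tvbound (TB S # \<Gamma>) i = Some T \<longrightarrow> tvbound (TB (liftT 1 k S) # \<Gamma>') (if i<Suc k then i else Suc i) = Some (liftT 1 (Suc k) T)"
proof (intro allI impI)
  fix i X assume h: "tvbound (TB S # \<Gamma>) i = Some X"
  show "tvbound (TB (liftT 1 k S) # \<Gamma>') (if i<Suc k then i else Suc i) = Some (liftT 1 (Suc k) X)"
  proof (cases i)
    case 0 then show ?thesis using h lift_lift[of 0 k S] by simp
  next
    case (Suc j)
    then obtain Y where y: "tvbound \<Gamma> j = Some Y" "X = liftT 1 0 Y" using h by auto
    have p: "tvbound \<Gamma>' (if j<k then j else Suc j) = Some (liftT 1 k Y)" using assms y(1) by blast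
    have e: "(if i < Suc k then i else Suc i) = Suc (if j<k then j else Suc j)" using Suc by simp
    show ?thesis unfolding e using p y(2) by (simp add: lift_lift)
  qed
qed

lemma sub_weak:
  "sub \<Gamma> A B \<Longrightarrow> (\<forall>i T. tvbound \<Gamma> i = Some T \<longrightarrow> tvbound \<Gamma>' (if i<k then i else Suc i) = Some (liftT 1 k T))
   \<Longrightarrow> sub \<Gamma>' (liftT 1 k A) (liftT 1 k B)"
proof (induction arbitrary: \<Gamma>' k rule: sub.induct)
  case (SVar \<Gamma> i T)
  have e: "liftT 1 k (TVar i) = TVar (if i<k then i else Suc i)" by simp
  show ?case unfolding e using SVar by (blast intro: sub.SVar)
next
  case (STop \<Gamma> T)
  then show ?case by (simp add: sub.STop)
next
  case (SRefl \<Gamma> T)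
  then show ?case by (simp add: sub.SRefl)
next
  case (STrans \<Gamma> S U T)
  then show ?case by (meson sub.STrans)
next
  case (SArr \<Gamma> S' S T T')
  then show ?case by (simp add: sub.SArr)
next
  case (SAllFun S \<Gamma> T T')
  show ?case using SAllFun.IH[OF weak_ext[OF SAllFun.prems]] by (simp add: sub.SAllFun)
next
  case (SAllLoc \<Gamma> T0 S0 S1 T1)
  show ?case using SAllLoc.IH(2)[OF weak_ext[OF SAllLoc.prems]] SAllLoc.IH(1)[OF SAllLoc.prems]
    by (simp add: sub.SAllLoc)
next
  case (SAllTop \<Gamma> T0 S0 S1 T1)
  have "sub (TB (liftT 1 k Top) # \<Gamma>') (liftT 1 (Suc k) S1) (liftT 1 (Suc k) T1)"
    using SAllTop.IH(2)[OF weak_ext[OF SAllTop.prems]] .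
  then show ?case using SAllTop.IH(1)[OF SAllTop.prems] by (simp add: sub.SAllTop)
qed

lemma sub_weak0: "sub \<Gamma> A B \<Longrightarrow> sub (TB S # \<Gamma>) (liftT 1 0 A) (liftT 1 0 B)"
  by (erule sub_weak) auto

lemma transfer_ext:
  assumes "\<forall>i T. tvbound \<Gamma> i = Some T \<longrightarrow> T = Top \<or> tvbound \<Gamma>' i = Some T"
  shows "\<forall>i T. tvbound (TB S # \<Gamma>) i = Some T \<longrightarrow> T = Top \<or> tvbound (TB S # \<Gamma>') i = Some T"
proof (intro allI impI)
  fix i X assume h: "tvbound (TB S # \<Gamma>) i = Some X"
  show "X = Top \<or> tvbound (TB S # \<Gamma>') i = Some X"
  proof (cases i)
    case 0 then show ?thesis using h by simp
  next
    case (Suc j)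
    then obtain Y where y: "tvbound \<Gamma> j = Some Y" "X = liftT 1 0 Y" using h by auto
    then have "Y = Top \<or> tvbound \<Gamma>' j = Some Y" using assms by blast
    then show ?thesis using y Suc by auto
  qed
qed

lemma sub_transfer:
  "sub \<Gamma> A B \<Longrightarrow> (\<forall>i T. tvbound \<Gamma> i = Some T \<longrightarrow> T = Top \<or> tvbound \<Gamma>' i = Some T)
   \<Longrightarrow> sub \<Gamma>' A B"
proof (induction arbitrary: \<Gamma>' rule: sub.induct)
  case (SVar \<Gamma> i T)
  then have "T = Top \<or> tvbound \<Gamma>' i = Some T" by blast
  then show ?case by (auto intro: sub.intros)
next
  case (SAllFun S \<Gamma> T T')
  then show ?case using transfer_ext[OF SAllFun.prems] by (simp add: sub.SAllFun)
next
  case (SAllLoc \<Gamma> T0 S0 S1 T1)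
  then show ?case using transfer_ext[OF SAllLoc.prems] by (simp add: sub.SAllLoc)
next
  case (SAllTop \<Gamma> T0 S0 S1 T1)
  then show ?case using transfer_ext[OF SAllTop.prems] by (simp add: sub.SAllTop)
qed (auto intro: sub.intros)

definition srel :: "nat \<Rightarrow> ty \<Rightarrow> ctx \<Rightarrow> ctx \<Rightarrow> bool" where
  "srel k U \<Gamma> \<Gamma>' \<longleftrightarrow> (\<forall>i T. tvbound \<Gamma> i = Some T \<longrightarrow>
     (i<k \<longrightarrow> tvbound \<Gamma>' i = Some (substT T k U)) \<and>
     (i=k \<longrightarrow> sub \<Gamma>' (liftT k 0 U) (substT T k U)) \<and>
     (k<i \<longrightarrow> tvbound \<Gamma>' (i-1) = Some (substT T k U)))"

lemma srel_ext:
  assumes "srel k U \<Gamma> \<Gamma>'"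
  shows "srel (Suc k) U (TB S # \<Gamma>) (TB (substT S k U) # \<Gamma>')"
  unfolding srel_def
proof (intro allI impI)
  fix i X assume h: "tvbound (TB S # \<Gamma>) i = Some X"
  show "(i < Suc k \<longrightarrow> tvbound (TB (substT S k U) # \<Gamma>') i = Some (substT X (Suc k) U)) \<and>
        (i = Suc k \<longrightarrow> sub (TB (substT S k U) # \<Gamma>') (liftT (Suc k) 0 U) (substT X (Suc k) U)) \<and>
        (Suc k < i \<longrightarrow> tvbound (TB (substT S k U) # \<Gamma>') (i - 1) = Some (substT X (Suc k) U))"
  proof (cases i)
    case 0 then show ?thesis using h subst_lift_comm[of 0 k S U] by simp
  next
    case (Suc j)
    then obtain Y where y: "tvbound \<Gamma> j = Some Y" "X = liftT 1 0 Y" using h by auto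
    have c: "substT X (Suc k) U = liftT 1 0 (substT Y k U)" using y(2) subst_lift_comm[of 0 k Y U] by simp
    have a1: "j < k \<Longrightarrow> tvbound \<Gamma>' j = Some (substT Y k U)" using assms y(1) unfolding srel_def by blast
    have a2: "j = k \<Longrightarrow> sub \<Gamma>' (liftT k 0 U) (substT Y k U)" using assms y(1) unfolding srel_def by blast
    have a3: "k < j \<Longrightarrow> tvbound \<Gamma>' (j-1) = Some (substT Y k U)" using assms y(1) unfolding srel_def by blast
    have l: "liftT 1 0 (liftT k 0 U) = liftT (Suc k) 0 U" using lift_lift2[of 0 0 k 1 U] by simp
    show ?thesis
    proof (intro conjI impI)
      assume "i < Suc k" then show "tvbound (TB (substT S k U) # \<Gamma>') i = Some (substT X (Suc k) U)"
        using a1 Suc c by simp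
    next
      assume ik: "i = Suc k" show "sub (TB (substT S k U) # \<Gamma>') (liftT (Suc k) 0 U) (substT X (Suc k) U)"
      proof -
        from ik have "j = k" using Suc by simp
        then have "sub \<Gamma>' (liftT k 0 U) (substT Y k U)" using a2 by simp
        then have "sub (TB (substT S k U) # \<Gamma>') (liftT 1 0 (liftT k 0 U)) (liftT 1 0 (substT Y k U))"
          by (rule sub_weak0)
        then show ?thesis using c l by simp
      qed
    next
      assume "Suc k < i"
      then have "k < j" "j = Suc (j - 1)" using Suc by auto
      then show "tvbound (TB (substT S k U) # \<Gamma>') (i - 1) = Some (substT X (Suc k) U)"
        using a3 Suc c by (metis diff_Suc_1 option.simps(9) tvbound.simps(3))
    qed
  qed
qed

lemma sub_subst:
  "sub \<Gamma> A B \<Longrightarrow> srel k U \<Gamma> \<Gamma>' \<Longrightarrow> sub \<Gamma>' (substT A k U) (substT B k U)"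
proof (induction arbitrary: \<Gamma>' k rule: sub.induct)
  case (SVar \<Gamma> i T)
  have "i < k \<or> i = k \<or> k < i" by arith
  then show ?case
  proof (elim disjE)
    assume "i < k" then show ?thesis using SVar unfolding srel_def by (auto intro: sub.SVar)
  next
    assume "i = k" then show ?thesis using SVar unfolding srel_def by auto
  next
    assume "k < i" then show ?thesis using SVar unfolding srel_def by (auto intro: sub.SVar)
  qed
next
  case (STop \<Gamma> T)
  then show ?case by (simp add: sub.STop)
next
  case (SRefl \<Gamma> T)
  then show ?case by (simp add: sub.SRefl)
next
  case (STrans \<Gamma> S U T)
  then show ?case by (meson sub.STrans)
next
  case (SArr \<Gamma> S' S T T')
  then show ?case by (simp add: sub.SArr)
next
  case (SAllFun S \<Gamma> T T')
  show ?case using SAllFun.IH[OF srel_ext[OF SAllFun.prems]] by (simp add: sub.SAllFun)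
next
  case (SAllLoc \<Gamma> T0 S0 S1 T1)
  show ?case using SAllLoc.IH(2)[OF srel_ext[OF SAllLoc.prems]] SAllLoc.IH(1)[OF SAllLoc.prems]
    by (simp add: sub.SAllLoc)
next
  case (SAllTop \<Gamma> T0 S0 S1 T1)
  have "sub (TB (substT Top k U) # \<Gamma>') (substT S1 (Suc k) U) (substT T1 (Suc k) U)"
    using SAllTop.IH(2)[OF srel_ext[OF SAllTop.prems]] .
  then show ?case using SAllTop.IH(1)[OF SAllTop.prems] by (simp add: sub.SAllTop)
qed

lemma sub_subst0:
  assumes "sub (TB V # \<Gamma>) A B" "sub \<Gamma> S V"
  shows "sub \<Gamma> (substT A 0 S) (substT B 0 S)"
proof -
  have "srel 0 S (TB V # \<Gamma>) \<Gamma>"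
    unfolding srel_def
  proof (intro allI impI)
    fix i X assume h: "tvbound (TB V # \<Gamma>) i = Some X"
    show "(i < 0 \<longrightarrow> tvbound \<Gamma> i = Some (substT X 0 S)) \<and> (i = 0 \<longrightarrow> sub \<Gamma> (liftT 0 0 S) (substT X 0 S)) \<and>
          (0 < i \<longrightarrow> tvbound \<Gamma> (i - 1) = Some (substT X 0 S))"
      using h assms(2) by (cases i) auto
  qed
  then show ?thesis using sub_subst assms(1) by blast
qed

lemma promote_nonvar[simp]:
  "promote \<Gamma> Top = Top" "promote \<Gamma> (Arr A B) = Arr A B"
  "promote \<Gamma> (AllK A B) = AllK A B" "promote \<Gamma> (AllT A B) = AllT A B"
proof (induct \<Gamma>)
  case (Cons b \<Gamma>)
  { case 1 show ?case using Cons by (cases b) auto }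
  { case 2 show ?case using Cons by (cases b) auto }
  { case 3 show ?case using Cons by (cases b) auto }
  { case 4 show ?case using Cons by (cases b) auto }
qed auto

lemma promote_lift: "promote (TB S # \<Gamma>) (liftT 1 0 A) = liftT 1 0 (promote \<Gamma> A)"
  by (cases A) auto

lemma promote_bound: "tvbound \<Gamma> i = Some B \<Longrightarrow> promote \<Gamma> (TVar i) = promote \<Gamma> B"
proof (induct \<Gamma> arbitrary: i B)
  case Nil then show ?case by simp
next
  case (Cons b \<Gamma>)
  show ?case
  proof (cases b)
    case (TB S)
    show ?thesis
    proof (cases i)
      case 0 then show ?thesis using Cons.prems TB promote_lift[of S \<Gamma> S] by auto
    next
      case (Suc j)
      then obtain Y where "tvbound \<Gamma> j = Some Y" "B = liftT 1 0 Y" using Cons.prems TB by auto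
      then show ?thesis using Cons.hyps Suc TB promote_lift[of S \<Gamma> Y] by auto
    qed
  next
    case (VB U) then show ?thesis using Cons by auto
  qed
qed

lemma sub_promote: "sub \<Gamma> T (promote \<Gamma> T)"
proof (induct \<Gamma> arbitrary: T)
  case Nil then show ?case by (simp add: sub.SRefl)
next
  case (Cons b \<Gamma>)
  show ?case
  proof (cases b)
    case (VB U)
    have "sub \<Gamma> T (promote \<Gamma> T)" using Cons by blast
    then have "sub (VB U # \<Gamma>) T (promote \<Gamma> T)" by (rule sub_transfer) auto
    then show ?thesis using VB by simp
  next
    case (TB S)
    show ?thesis
    proof (cases T)
      case (TVar i)
      show ?thesis
      proof (cases i)
        case 0
        have "sub (TB S # \<Gamma>) (TVar 0) (liftT 1 0 S)" by (rule sub.SVar) simp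
        moreover have "sub (TB S # \<Gamma>) (liftT 1 0 S) (liftT 1 0 (promote \<Gamma> S))"
          using Cons sub_weak0 by blast
        ultimately show ?thesis using TB TVar 0 by (auto intro: sub.STrans)
      next
        case (Suc j)
        have "sub (TB S # \<Gamma>) (liftT 1 0 (TVar j)) (liftT 1 0 (promote \<Gamma> (TVar j)))"
          using Cons sub_weak0 by blast
        then show ?thesis using TB TVar Suc by simp
      qed
    qed (auto intro: sub.SRefl)
  qed
qed

lemma narrow_top: "sub (TB Top # \<Gamma>) A B \<Longrightarrow> sub (TB V # \<Gamma>) A B"
  apply (erule sub_transfer)
  apply (intro allI impI)
  subgoal for i T by (cases i) auto
  done

lemma inv_arr:
  "sub \<Gamma> A B \<Longrightarrow> promote \<Gamma> B = Arr B1 B2 \<Longrightarrow>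
   \<exists>A1 A2. promote \<Gamma> A = Arr A1 A2 \<and> sub \<Gamma> B1 A1 \<and> sub \<Gamma> A2 B2"
proof (induction arbitrary: B1 B2 rule: sub.induct)
  case (SVar \<Gamma> i T)
  then show ?case using promote_bound[OF SVar.hyps] by (auto intro: sub.SRefl)
next
  case (SRefl \<Gamma> T)
  then show ?case by (auto intro: sub.SRefl)
next
  case (STrans \<Gamma> S U T)
  then obtain U1 U2 where u: "promote \<Gamma> U = Arr U1 U2" "sub \<Gamma> B1 U1" "sub \<Gamma> U2 B2" by blast
  then obtain A1 A2 where "promote \<Gamma> S = Arr A1 A2" "sub \<Gamma> U1 A1" "sub \<Gamma> A2 U2" using STrans.IH(1) by blast
  then show ?case using u by (blast intro: sub.STrans)
qed auto

lemma inv_allk: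
  "sub \<Gamma> A B \<Longrightarrow> promote \<Gamma> B = AllK B1 B2 \<Longrightarrow>
   \<exists>A2. promote \<Gamma> A = AllK B1 A2 \<and> sub (TB B1 # \<Gamma>) A2 B2"
proof (induction arbitrary: B1 B2 rule: sub.induct)
  case (SVar \<Gamma> i T)
  then show ?case using promote_bound[OF SVar.hyps] by (auto intro: sub.SRefl)
next
  case (SRefl \<Gamma> T)
  then show ?case by (auto intro: sub.SRefl)
next
  case (STrans \<Gamma> S U T)
  then obtain U2 where u: "promote \<Gamma> U = AllK B1 U2" "sub (TB B1 # \<Gamma>) U2 B2" by blast
  then obtain A2 where "promote \<Gamma> S = AllK B1 A2" "sub (TB B1 # \<Gamma>) A2 U2" using STrans.IH(1) by blast
  then show ?case using u by (blast intro: sub.STrans)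
qed auto

lemma inv_allt:
  "sub \<Gamma> A B \<Longrightarrow> promote \<Gamma> B = AllT B1 B2 \<Longrightarrow>
   (\<exists>A1 A2. promote \<Gamma> A = AllK A1 A2 \<and> sub \<Gamma> B1 A1 \<and> sub (TB A1 # \<Gamma>) A2 B2) \<or>
   (\<exists>A1 A2. promote \<Gamma> A = AllT A1 A2 \<and> sub \<Gamma> B1 A1 \<and> sub (TB Top # \<Gamma>) A2 B2)"
proof (induction arbitrary: B1 B2 rule: sub.induct)
  case (SVar \<Gamma> i T)
  then show ?case using promote_bound[OF SVar.hyps] by (auto intro: sub.SRefl)
next
  case (SRefl \<Gamma> T)
  then show ?case by (auto intro: sub.SRefl)
next
  case (STrans \<Gamma> S U T)
  from STrans.IH(2)[OF STrans.prems] show ?case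
  proof (elim disjE exE conjE)
    fix U1 U2 assume u: "promote \<Gamma> U = AllK U1 U2" "sub \<Gamma> B1 U1" "sub (TB U1 # \<Gamma>) U2 B2"
    then obtain A2 where "promote \<Gamma> S = AllK U1 A2" "sub (TB U1 # \<Gamma>) A2 U2"
      using inv_allk[OF STrans.hyps(1) u(1)] by blast
    then show ?case using u by (blast intro: sub.STrans)
  next
    fix U1 U2 assume u: "promote \<Gamma> U = AllT U1 U2" "sub \<Gamma> B1 U1" "sub (TB Top # \<Gamma>) U2 B2"
    from STrans.IH(1)[OF u(1)] show ?case
    proof (elim disjE exE conjE)
      fix A1 A2 assume a: "promote \<Gamma> S = AllK A1 A2" "sub \<Gamma> U1 A1" "sub (TB A1 # \<Gamma>) A2 U2"
      have "sub (TB A1 # \<Gamma>) U2 B2" using u(3) by (rule narrow_top)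
      then show ?case using a u by (blast intro: sub.STrans)
    next
      fix A1 A2 assume a: "promote \<Gamma> S = AllT A1 A2" "sub \<Gamma> U1 A1" "sub (TB Top # \<Gamma>) A2 U2"
      then show ?case using u by (blast intro: sub.STrans)
    qed
  qed
qed auto

lemma soundness: "mtyp \<Gamma> t S \<Longrightarrow> typing \<Gamma> t S"
proof (induction rule: mtyp.induct)
  case (MVar \<Gamma> j T) then show ?case by (rule TyVar)
next
  case (MTop \<Gamma>) then show ?case by (rule TyTop)
next
  case (MAbs S \<Gamma> t T) from MAbs.IH show ?case by (rule TyAbs)
next
  case (MApp \<Gamma> r R s S S' T)
  have "typing \<Gamma> r (Arr S' T)" using MApp TySub sub_promote by metis
  moreover have "typing \<Gamma> s S'" using MApp TySub by metis
  ultimately show ?case by (rule TyApp)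
next
  case (MTAbs S \<Gamma> t T) from MTAbs.IH show ?case by (rule TyTAbs)
next
  case (MTApp \<Gamma> r R S S' T)
  have "sub \<Gamma> (promote \<Gamma> R) (AllT S' T)"
    using MTApp.hyps(3) sub.SAllLoc[OF sub.SRefl sub.SRefl, of \<Gamma> S' T] by (auto intro: sub.SRefl)
  then have "typing \<Gamma> r (AllT S' T)" using MTApp.IH sub_promote TySub sub.STrans by metis
  then show ?case using MTApp.hyps(2) by (rule TyTApp)
qed

lemma completeness: "typing \<Gamma> t T \<Longrightarrow> \<exists>S. mtyp \<Gamma> t S \<and> sub \<Gamma> S T"
proof (induction rule: typing.induct)
  case (TyTop \<Gamma>) then show ?case by (auto intro: mtyp.intros sub.intros)
next
  case (TyVar \<Gamma> j T) then show ?case by (auto intro: mtyp.intros sub.intros)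
next
  case (TySub \<Gamma> t T T') then show ?case by (auto intro: sub.STrans)
next
  case (TyAbs S \<Gamma> t T)
  then obtain S0 where a: "mtyp (VB S # \<Gamma>) t S0" "sub (VB S # \<Gamma>) S0 T" by blast
  have "sub \<Gamma> S0 T" using a(2) by (rule sub_transfer) auto
  then show ?case using a(1) by (blast intro: mtyp.MAbs sub.SArr sub.SRefl)
next
  case (TyApp \<Gamma> t S T s)
  then obtain R Q where r: "mtyp \<Gamma> t R" "sub \<Gamma> R (Arr S T)" "mtyp \<Gamma> s Q" "sub \<Gamma> Q S" by blast
  obtain A1 A2 where "promote \<Gamma> R = Arr A1 A2" "sub \<Gamma> S A1" "sub \<Gamma> A2 T"
    using inv_arr[OF r(2)] by auto
  then show ?case using r by (blast intro: mtyp.MApp sub.STrans)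
next
  case (TyTAbs S \<Gamma> t T)
  then show ?case by (blast intro: mtyp.MTAbs sub.SAllFun)
next
  case (TyTApp \<Gamma> t S T S')
  then obtain R where r: "mtyp \<Gamma> t R" "sub \<Gamma> R (AllT S T)" by blast
  have "(\<exists>A1 A2. promote \<Gamma> R = AllK A1 A2 \<and> sub \<Gamma> S A1 \<and> sub (TB A1 # \<Gamma>) A2 T) \<or>
   (\<exists>A1 A2. promote \<Gamma> R = AllT A1 A2 \<and> sub \<Gamma> S A1 \<and> sub (TB Top # \<Gamma>) A2 T)"
    using inv_allt[OF r(2)] by simp
  then show ?case
  proof (elim disjE exE conjE)
    fix A1 A2 assume a: "promote \<Gamma> (R) = AllK A1 A2" "sub \<Gamma> S A1" "sub (TB A1 # \<Gamma>) A2 T"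
    have s: "sub \<Gamma> S' A1" using TyTApp.hyps(2) a(2) by (rule sub.STrans)
    have "mtyp \<Gamma> (TApp t S') (substT A2 0 S')" using r(1) s a(1) by (blast intro: mtyp.MTApp)
    moreover have "sub \<Gamma> (substT A2 0 S') (substT T 0 S')" using a(3) s by (rule sub_subst0)
    ultimately show ?case by blast
  next
    fix A1 A2 assume a: "promote \<Gamma> (R) = AllT A1 A2" "sub \<Gamma> S A1" "sub (TB Top # \<Gamma>) A2 T"
    have s: "sub \<Gamma> S' A1" using TyTApp.hyps(2) a(2) by (rule sub.STrans)
    have "mtyp \<Gamma> (TApp t S') (substT A2 0 S')" using r(1) s a(1) by (blast intro: mtyp.MTApp)
    moreover have "sub \<Gamma> (substT A2 0 S') (substT T 0 S')" using a(3) sub.STop by (rule sub_subst0)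
    ultimately show ?case by blast
  qed
qed

theorem proposition6p4:
  assumes "wf_ctx \<Gamma>" and "wf_tm \<Gamma> t" and "wfT (ntv \<Gamma>) T"
  shows "typing \<Gamma> t T \<longleftrightarrow> (\<exists>S. mtyp \<Gamma> t S \<and> sub \<Gamma> S T)"
  using completeness soundness TySub by blast

end
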